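(* Let $M$ be a finite abelian group of exponent greater than $2$. Let $f'\in\mathrm{Aut}(K)$, $f''\in\mathrm{Aut}(M)$, and $u,v\in M$ with $u^2=v^2=1$. Then $F^+_{(f',f'',u,v)}$ is an automorphism of $L_M$ and $F^-_{(f',f'',u,v)}$ is a proper half-automorphism of $L_M$.
   Context: Let $K=\{1,a,b,c\}$ be the Klein four-group. Set $L_M=K\times M$ with the operation $(A,x)*(B,y)=(AB,xy)$ if $B=1$, and $(A,x)*(B,y)=(AB,x^{-1}y)$ if $B\neq 1$. For $u,v\in M$ with $u^2=v^2=1$, $\alpha_{(u,v)}:K\to M$ is defined by $\alpha_{(u,v)}(1)=1$, $\alpha_{(u,v)}(a)=u$, $\alpha_{(u,v)}(b)=v$, $\alpha_{(u,v)}(c)=uv$. For $f'\in\mathrm{Aut}(K)$, $f''\in\mathrm{Aut}(M)$ define $F^+_{(f',f'',u,v)}(A,x)=(f'(A),f''(x)\alpha_{(u,v)}(A))$ for all $(A,x)\in L_M$, and $F^-_{(f',f'',u,v)}(1,x)=(1,f''(x))$, $F^-_{(f',f'',u,v)}(A,x)=(f'(A),f''(x^{-1})\alpha_{(u,v)}(A))$ for $A\neq 1$. A half-automorphism of a loop $L$ is a bijection $f:L\to L$ with $f(XY)\in\{f(X)f(Y),f(Y)f(X)\}$ for all $X,Y$; it is proper if it is neither an automorphism nor an anti-automorphism. *)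

theory Defs
  imports "HOL-Algebra.Algebra"
begin

datatype klein = K1 | Ka | Kb | Kc

fun kmult :: "klein \<Rightarrow> klein \<Rightarrow> klein" where
  "kmult K1 y = y"
| "kmult x K1 = x"
| "kmult Ka Ka = K1" | "kmult Kb Kb = K1" | "kmult Kc Kc = K1"
| "kmult Ka Kb = Kc" | "kmult Kb Ka = Kc"
| "kmult Ka Kc = Kb" | "kmult Kc Ka = Kb"
| "kmult Kb Kc = Ka" | "kmult Kc Kb = Ka"

definition Klein :: "klein monoid" where
  "Klein = \<lparr>carrier = UNIV, monoid.mult = kmult, one = K1\<rparr>"

definition group_exponent :: "('a, 'b) monoid_scheme \<Rightarrow> nat" where
  "group_exponent G = (LEAST n. 0 < n \<and> (\<forall>x\<in>carrier G. x [^]\<^bsub>G\<^esub> n = \<one>\<^bsub>G\<^esub>))"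

definition LM_carrier :: "('a, 'b) monoid_scheme \<Rightarrow> (klein \<times> 'a) set" where
  "LM_carrier M = (UNIV :: klein set) \<times> carrier M"

definition LM_mult :: "('a, 'b) monoid_scheme \<Rightarrow> klein \<times> 'a \<Rightarrow> klein \<times> 'a \<Rightarrow> klein \<times> 'a" where
  "LM_mult M P Q = (case P of (A, x) \<Rightarrow> case Q of (B, y) \<Rightarrow>
     if B = K1 then (kmult A B, monoid.mult M x y)
     else (kmult A B, monoid.mult M (m_inv M x) y))"

definition alpha :: "('a, 'b) monoid_scheme \<Rightarrow> 'a \<Rightarrow> 'a \<Rightarrow> klein \<Rightarrow> 'a" where
  "alpha M u v A = (case A of K1 \<Rightarrow> one M | Ka \<Rightarrow> u | Kb \<Rightarrow> v | Kc \<Rightarrow> monoid.mult M u v)"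

definition Fplus :: "('a, 'b) monoid_scheme \<Rightarrow> (klein \<Rightarrow> klein) \<Rightarrow> ('a \<Rightarrow> 'a) \<Rightarrow> 'a \<Rightarrow> 'a
    \<Rightarrow> klein \<times> 'a \<Rightarrow> klein \<times> 'a" where
  "Fplus M f' f'' u v P = (case P of (A, x) \<Rightarrow> (f' A, monoid.mult M (f'' x) (alpha M u v A)))"

definition Fminus :: "('a, 'b) monoid_scheme \<Rightarrow> (klein \<Rightarrow> klein) \<Rightarrow> ('a \<Rightarrow> 'a) \<Rightarrow> 'a \<Rightarrow> 'a
    \<Rightarrow> klein \<times> 'a \<Rightarrow> klein \<times> 'a" where
  "Fminus M f' f'' u v P = (case P of (A, x) \<Rightarrow>
     if A = K1 then (K1, f'' x)
     else (f' A, monoid.mult M (f'' (m_inv M x)) (alpha M u v A)))"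

definition loop_automorphism :: "'c set \<Rightarrow> ('c \<Rightarrow> 'c \<Rightarrow> 'c) \<Rightarrow> ('c \<Rightarrow> 'c) \<Rightarrow> bool" where
  "loop_automorphism S mul f \<longleftrightarrow> bij_betw f S S \<and>
     (\<forall>P\<in>S. \<forall>Q\<in>S. f (mul P Q) = mul (f P) (f Q))"

definition loop_anti_automorphism :: "'c set \<Rightarrow> ('c \<Rightarrow> 'c \<Rightarrow> 'c) \<Rightarrow> ('c \<Rightarrow> 'c) \<Rightarrow> bool" where
  "loop_anti_automorphism S mul f \<longleftrightarrow> bij_betw f S S \<and>
     (\<forall>P\<in>S. \<forall>Q\<in>S. f (mul P Q) = mul (f Q) (f P))"

definition half_automorphism :: "'c set \<Rightarrow> ('c \<Rightarrow> 'c \<Rightarrow> 'c) \<Rightarrow> ('c \<Rightarrow> 'c) \<Rightarrow> bool" where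
  "half_automorphism S mul f \<longleftrightarrow> bij_betw f S S \<and>
     (\<forall>P\<in>S. \<forall>Q\<in>S. f (mul P Q) \<in> {mul (f P) (f Q), mul (f Q) (f P)})"

definition proper_half_automorphism :: "'c set \<Rightarrow> ('c \<Rightarrow> 'c \<Rightarrow> 'c) \<Rightarrow> ('c \<Rightarrow> 'c) \<Rightarrow> bool" where
  "proper_half_automorphism S mul f \<longleftrightarrow> half_automorphism S mul f \<and>
     \<not> loop_automorphism S mul f \<and> \<not> loop_anti_automorphism S mul f"

end

theory Submission
  imports Defs
begin

lemma klein_UNIV: "(UNIV :: klein set) = {K1, Ka, Kb, Kc}"
  using klein.exhaust by blast

lemma finite_klein: "finite (UNIV :: klein set)"
  by (simp add: klein_UNIV)

lemma kmult_idem: "kmult z z = z \<Longrightarrow> z = K1"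
  by (cases z) auto

lemma kmult_K1_right[simp]: "kmult A K1 = A"
  by (cases A) auto

lemma kmult_self: "kmult A A = K1"
  by (cases A) auto

lemma kmult_K1_iff: "kmult A B = K1 \<longleftrightarrow> A = B"
  by (cases A; cases B) auto

lemma kmult_comm: "kmult A B = kmult B A"
  by (cases A; cases B) auto

lemma klein_iso_facts:
  assumes "f' \<in> iso Klein Klein"
  shows "f' K1 = K1" "\<And>A B. f' (kmult A B) = kmult (f' A) (f' B)" "inj f'"
    "\<And>A. f' A = K1 \<longleftrightarrow> A = K1"
proof -
  have h: "\<And>A B. f' (kmult A B) = kmult (f' A) (f' B)"
    using assms unfolding iso_def hom_def Klein_def by auto
  show "\<And>A B. f' (kmult A B) = kmult (f' A) (f' B)" by (rule h)
  have i: "inj f'" using assms unfolding iso_def bij_betw_def Klein_def by auto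
  show "inj f'" by (rule i)
  have 1: "f' K1 = K1" using h[of K1 K1] kmult_idem by simp
  show "f' K1 = K1" by (rule 1)
  show "\<And>A. f' A = K1 \<longleftrightarrow> A = K1" using 1 i by (metis injD)
qed

lemma card_eq_bij:
  assumes "finite S" "inj_on f S" "f ` S \<subseteq> S"
  shows "bij_betw f S S"
  using assms by (simp add: bij_betw_def card_image card_subset_eq)

theorem proposition4p10:
  fixes M :: "('a, 'b) monoid_scheme"
    and f' :: "klein \<Rightarrow> klein" and f'' :: "'a \<Rightarrow> 'a" and u v :: 'a
  assumes "comm_group M" and "finite (carrier M)"
    and "group_exponent M > 2"
    and "f' \<in> iso Klein Klein" and "f'' \<in> iso M M"
    and "u \<in> carrier M" and "v \<in> carrier M"
    and "u \<otimes>\<^bsub>M\<^esub> u = \<one>\<^bsub>M\<^esub>" and "v \<otimes>\<^bsub>M\<^esub> v = \<one>\<^bsub>M\<^esub>"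
  shows "loop_automorphism (LM_carrier M) (LM_mult M) (Fplus M f' f'' u v)
       \<and> proper_half_automorphism (LM_carrier M) (LM_mult M) (Fminus M f' f'' u v)"
proof -
  interpret G: comm_group M by fact
  interpret H: group_hom M M f''
    using assms(5) by (unfold_locales) (auto simp: iso_def)
  note kf = klein_iso_facts[OF assms(4)]
  have fc: "\<And>x. x \<in> carrier M \<Longrightarrow> f'' x \<in> carrier M" by simp
  have finj: "inj_on f'' (carrier M)" using assms(5) by (auto simp: iso_def bij_betw_def)
  have finv: "\<And>x. x \<in> carrier M \<Longrightarrow> f'' (inv\<^bsub>M\<^esub> x) = inv\<^bsub>M\<^esub> (f'' x)"
    by simp
  define al where "al = alpha M u v"
  have alc: "\<And>A. al A \<in> carrier M" unfolding al_def alpha_def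
    using assms(6,7) by (auto split: klein.split)
  have alm: "\<And>A B. al (kmult A B) = al A \<otimes>\<^bsub>M\<^esub> al B"
  proof -
    fix A B show "al (kmult A B) = al A \<otimes>\<^bsub>M\<^esub> al B"
      unfolding al_def alpha_def using assms(6-9)
      by (cases A; cases B) (auto simp: G.m_ac G.m_assoc[symmetric])
  qed
  have aliv: "\<And>A. inv\<^bsub>M\<^esub> (al A) = al A"
    using alm[of A A for A] kmult_self alc
    by (metis G.inv_equality al_def alpha_def klein.simps(13))

  have al1: "al K1 = \<one>\<^bsub>M\<^esub>" by (simp add: al_def alpha_def)
  have alsq: "\<And>A z. z \<in> carrier M \<Longrightarrow> al A \<otimes>\<^bsub>M\<^esub> (al A \<otimes>\<^bsub>M\<^esub> z) = z"
  proof -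
    fix A z assume z: "z \<in> carrier M"
    have "al A \<otimes>\<^bsub>M\<^esub> al A = \<one>\<^bsub>M\<^esub>" using alm[of A A] kmult_self al1 by simp
    then show "al A \<otimes>\<^bsub>M\<^esub> (al A \<otimes>\<^bsub>M\<^esub> z) = z" using z alc[of A] by (simp add: G.m_assoc[symmetric])
  qed
  have FP: "\<And>A x. Fplus M f' f'' u v (A, x) = (f' A, f'' x \<otimes>\<^bsub>M\<^esub> al A)"
    by (simp add: Fplus_def al_def)
  have FM: "\<And>A x. Fminus M f' f'' u v (A, x) = (if A = K1 then (K1, f'' x) else (f' A, f'' (inv\<^bsub>M\<^esub> x) \<otimes>\<^bsub>M\<^esub> al A))"
    by (simp add: Fminus_def al_def)
  have LMm: "\<And>A x B y. LM_mult M (A, x) (B, y) = (if B = K1 then (kmult A B, x \<otimes>\<^bsub>M\<^esub> y) else (kmult A B, inv\<^bsub>M\<^esub> x \<otimes>\<^bsub>M\<^esub> y))"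
    by (simp add: LM_mult_def)
  have mem: "\<And>A x. (A, x) \<in> LM_carrier M \<longleftrightarrow> x \<in> carrier M" by (simp add: LM_carrier_def)
  have finS: "finite (LM_carrier M)" using assms(2) finite_klein by (simp add: LM_carrier_def)
  have fK: "\<And>A. f' A = K1 \<longleftrightarrow> A = K1" by (rule kf(4))
  have fK': "\<And>A. K1 = f' A \<longleftrightarrow> A = K1" using kf(4) by metis
  have f'inj: "\<And>A B. f' A = f' B \<longleftrightarrow> A = B" using kf(3) by (metis injD)
  have f''inj: "\<And>x y. x \<in> carrier M \<Longrightarrow> y \<in> carrier M \<Longrightarrow> f'' x = f'' y \<longleftrightarrow> x = y"
    using finj by (metis inj_onD)
  have cancel: "\<And>a b c. a \<in> carrier M \<Longrightarrow> b \<in> carrier M \<Longrightarrow> c \<in> carrier M \<Longrightarrow> a \<otimes>\<^bsub>M\<^esub> c = b \<otimes>\<^bsub>M\<^esub> c \<longleftrightarrow> a = b"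
    by simp
  have P1: "loop_automorphism (LM_carrier M) (LM_mult M) (Fplus M f' f'' u v)"
  proof -
    have inj: "inj_on (Fplus M f' f'' u v) (LM_carrier M)"
    proof (rule inj_onI)
      fix P Q assume "P \<in> LM_carrier M" "Q \<in> LM_carrier M" "Fplus M f' f'' u v P = Fplus M f' f'' u v Q"
      then show "P = Q" using alc fc f'inj f''inj cancel
        by (cases P; cases Q) (auto simp: FP mem)
    qed
    have img: "Fplus M f' f'' u v ` LM_carrier M \<subseteq> LM_carrier M"
      using alc fc by (auto simp: LM_carrier_def FP)
    have hom: "\<forall>P\<in>LM_carrier M. \<forall>Q\<in>LM_carrier M. Fplus M f' f'' u v (LM_mult M P Q) =
        LM_mult M (Fplus M f' f'' u v P) (Fplus M f' f'' u v Q)"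
    proof (intro ballI)
      fix P Q assume "P \<in> LM_carrier M" "Q \<in> LM_carrier M"
      then obtain A x B y where PQ: "P = (A, x)" "Q = (B, y)" "x \<in> carrier M" "y \<in> carrier M"
        by (cases P; cases Q) (auto simp: mem)
      show "Fplus M f' f'' u v (LM_mult M P Q) = LM_mult M (Fplus M f' f'' u v P) (Fplus M f' f'' u v Q)"
        using PQ alc[of A] alc[of B] fc[of x] fc[of y]
        by (cases "B = K1") (auto simp: LMm FP kf(1,2) fK al1 alm aliv G.m_ac G.inv_mult)
    qed
    show ?thesis unfolding loop_automorphism_def using card_eq_bij[OF finS inj img] hom by blast
  qed

  obtain w where w: "w \<in> carrier M" "w \<otimes>\<^bsub>M\<^esub> w \<noteq> \<one>\<^bsub>M\<^esub>"
  proof -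
    have "\<exists>w\<in>carrier M. w \<otimes>\<^bsub>M\<^esub> w \<noteq> \<one>\<^bsub>M\<^esub>"
    proof (rule ccontr)
      assume "\<not> ?thesis"
      then have "\<forall>x\<in>carrier M. x [^]\<^bsub>M\<^esub> (2::nat) = \<one>\<^bsub>M\<^esub>"
        by (simp add: numeral_2_eq_2)
      then have "group_exponent M \<le> 2" unfolding group_exponent_def
        by (intro Least_le) auto
      with assms(3) show False by simp
    qed
    then show ?thesis using that by blast
  qed
  have wbad: "\<And>c. c \<in> carrier M \<Longrightarrow> f'' w \<otimes>\<^bsub>M\<^esub> c \<noteq> inv\<^bsub>M\<^esub> (f'' w) \<otimes>\<^bsub>M\<^esub> c"
  proof
    fix c assume c: "c \<in> carrier M" and e: "f'' w \<otimes>\<^bsub>M\<^esub> c = inv\<^bsub>M\<^esub> (f'' w) \<otimes>\<^bsub>M\<^esub> c"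
    have "f'' w = inv\<^bsub>M\<^esub> (f'' w)" using e c w fc by simp
    then have "f'' w \<otimes>\<^bsub>M\<^esub> f'' w = \<one>\<^bsub>M\<^esub>" using w fc
      by (metis G.r_inv)
    then have "f'' (w \<otimes>\<^bsub>M\<^esub> w) = f'' \<one>\<^bsub>M\<^esub>" using w H.hom_mult H.hom_one by metis
    then have "w \<otimes>\<^bsub>M\<^esub> w = \<one>\<^bsub>M\<^esub>" using w f''inj by (meson G.m_closed G.one_closed)
    with w show False by simp
  qed
  have P2: "half_automorphism (LM_carrier M) (LM_mult M) (Fminus M f' f'' u v)"
  proof -
    have inj: "inj_on (Fminus M f' f'' u v) (LM_carrier M)"
    proof (rule inj_onI)
      fix P Q assume "P \<in> LM_carrier M" "Q \<in> LM_carrier M" "Fminus M f' f'' u v P = Fminus M f' f'' u v Q"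
      then show "P = Q" using alc fc f'inj f''inj cancel fK fK'
        by (cases P; cases Q) (auto simp: FM mem split: if_splits)
    qed
    have img: "Fminus M f' f'' u v ` LM_carrier M \<subseteq> LM_carrier M"
      using alc fc by (auto simp: LM_carrier_def FM split: if_splits)
    have hom: "\<forall>P\<in>LM_carrier M. \<forall>Q\<in>LM_carrier M. Fminus M f' f'' u v (LM_mult M P Q) \<in>
        {LM_mult M (Fminus M f' f'' u v P) (Fminus M f' f'' u v Q), LM_mult M (Fminus M f' f'' u v Q) (Fminus M f' f'' u v P)}"
    proof (intro ballI)
      fix P Q assume "P \<in> LM_carrier M" "Q \<in> LM_carrier M"
      then obtain A x B y where PQ: "P = (A, x)" "Q = (B, y)" "x \<in> carrier M" "y \<in> carrier M"
        by (cases P; cases Q) (auto simp: mem)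
      show "Fminus M f' f'' u v (LM_mult M P Q) \<in> {LM_mult M (Fminus M f' f'' u v P) (Fminus M f' f'' u v Q), LM_mult M (Fminus M f' f'' u v Q) (Fminus M f' f'' u v P)}"
        using PQ alc[of A] alc[of B] fc[of x] fc[of y]
        by (cases "A = K1"; cases "B = K1"; cases "A = B")
          (auto simp: LMm FM kf(1,2) fK al1 alm aliv G.m_ac G.inv_mult kmult_K1_iff kmult_comm kmult_self alsq)
    qed
    show ?thesis unfolding half_automorphism_def using card_eq_bij[OF finS inj img] hom by blast
  qed
  have P3: "\<not> loop_automorphism (LM_carrier M) (LM_mult M) (Fminus M f' f'' u v)"
  proof
    assume "loop_automorphism (LM_carrier M) (LM_mult M) (Fminus M f' f'' u v)"
    then have "Fminus M f' f'' u v (LM_mult M (K1, w) (Ka, \<one>\<^bsub>M\<^esub>)) =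
      LM_mult M (Fminus M f' f'' u v (K1, w)) (Fminus M f' f'' u v (Ka, \<one>\<^bsub>M\<^esub>))"
      unfolding loop_automorphism_def using w by (auto simp: mem)
    then show False using w fc[of w] alc[of Ka] wbad[of "al Ka"]
      by (auto simp: LMm FM kf(1) fK)
  qed
  have P4: "\<not> loop_anti_automorphism (LM_carrier M) (LM_mult M) (Fminus M f' f'' u v)"
  proof
    assume "loop_anti_automorphism (LM_carrier M) (LM_mult M) (Fminus M f' f'' u v)"
    then have "Fminus M f' f'' u v (LM_mult M (Ka, w) (Kb, \<one>\<^bsub>M\<^esub>)) =
      LM_mult M (Fminus M f' f'' u v (Kb, \<one>\<^bsub>M\<^esub>)) (Fminus M f' f'' u v (Ka, w))"
      unfolding loop_anti_automorphism_def using w by (auto simp: mem)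
    moreover have "al Kc = al Ka \<otimes>\<^bsub>M\<^esub> al Kb" using alm[of Ka Kb] by simp
    ultimately show False using w fc[of w] alc[of Ka] alc[of Kb] wbad[of "al Ka \<otimes>\<^bsub>M\<^esub> al Kb"]
      by (auto simp: LMm FM kf(1) fK aliv G.m_ac G.inv_mult)
  qed
  show ?thesis using P1 P2 P3 P4 unfolding proper_half_automorphism_def by blast
qed

end
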